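(* A thin CW complex of positive dimension (i.e. one with $J_n\neq\emptyset$ for some $n\ge1$) is not reflexive.
   Context: A parametrization of a diffeological space $Y$ is a map from an open subset of a Euclidean space; $Y$ is reflexive if every parametrization $P$ such that $g\circ P$ is smooth for all smooth $g:Y\to\mathbb{R}$ is a plot. For $n\ge0$, $\mathbb{D}^{n,0}=\mathbb{R}^n$ and $\mathbb{S}^{n-1,0}=\{u\in\mathbb{R}^n:\|u\|\ge1\}$ (empty for $n=0$), with subset diffeologies. A thin CW complex is a diffeological space $X$ with subspaces $\emptyset=X^{(-1)}\subset X^{(0)}\subset\cdots$, index sets $J_n$ and smooth maps $h_n:\coprod_{j\in J_n}\mathbb{S}^{n-1,0}\to X^{(n-1)}$ such that each $X^{(n)}$ is the pushout in diffeological spaces of the inclusion $\coprod_j\mathbb{S}^{n-1,0}\hookrightarrow\coprod_j\mathbb{D}^{n,0}$ and $h_n$, and $X$ is the diffeological colimit of the $X^{(n)}$. *)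

theory Defs
  imports "HOL-Analysis.Analysis"
begin

text \<open>R^n is represented as the set of real sequences vanishing from index n on;
the product topology on nat \<Rightarrow> real restricts to the Euclidean topology on it.\<close>

definition Rn :: "nat \<Rightarrow> (nat \<Rightarrow> real) set" where
  "Rn n = {x. \<forall>i\<ge>n. x i = 0}"

definition open_in_Rn :: "nat \<Rightarrow> (nat \<Rightarrow> real) set \<Rightarrow> bool" where
  "open_in_Rn n U \<longleftrightarrow> U \<subseteq> Rn n \<and> openin (top_of_set (Rn n)) U"

definition sqnorm :: "nat \<Rightarrow> (nat \<Rightarrow> real) \<Rightarrow> real" where
  "sqnorm n u = (\<Sum>i<n. (u i)^2)"

fun Ck :: "nat \<Rightarrow> nat \<Rightarrow> (nat \<Rightarrow> real) set \<Rightarrow> ((nat \<Rightarrow> real) \<Rightarrow> real) \<Rightarrow> bool" where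
  "Ck 0 n U g = continuous_on U g"
| "Ck (Suc k) n U g = (continuous_on U g \<and>
     (\<forall>i<n. \<exists>g'. (\<forall>x\<in>U. ((\<lambda>t. g (x(i := x i + t))) has_real_derivative g' x) (at 0))
                 \<and> Ck k n U g'))"

definition Cinf :: "nat \<Rightarrow> (nat \<Rightarrow> real) set \<Rightarrow> ((nat \<Rightarrow> real) \<Rightarrow> real) \<Rightarrow> bool" where
  "Cinf n U g \<longleftrightarrow> (\<forall>k. Ck k n U g)"

definition smooth_map :: "nat \<Rightarrow> nat \<Rightarrow> (nat \<Rightarrow> real) set \<Rightarrow> ((nat \<Rightarrow> real) \<Rightarrow> (nat \<Rightarrow> real)) \<Rightarrow> bool" where
  "smooth_map m n V F \<longleftrightarrow> (\<forall>v\<in>V. F v \<in> Rn n) \<and> (\<forall>j<n. Cinf m V (\<lambda>v. F v j))"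

definition Sn0 :: "nat \<Rightarrow> (nat \<Rightarrow> real) set" where
  "Sn0 n = {u \<in> Rn n. sqnorm n u \<ge> 1}"

definition Bn0 :: "nat \<Rightarrow> (nat \<Rightarrow> real) set" where
  "Bn0 n = {u \<in> Rn n. sqnorm n u < 1}"

text \<open>A diffeology on a carrier X is a set D of plots (n, U, P), with U open in R^n and
P : U \<rightarrow> X. Values of P outside U are irrelevant (extensionality).\<close>

type_synonym 'a diffeology = "(nat \<times> (nat \<Rightarrow> real) set \<times> ((nat \<Rightarrow> real) \<Rightarrow> 'a)) set"

definition parametrization :: "'a set \<Rightarrow> nat \<Rightarrow> (nat \<Rightarrow> real) set \<Rightarrow> ((nat \<Rightarrow> real) \<Rightarrow> 'a) \<Rightarrow> bool" where
  "parametrization X n U P \<longleftrightarrow> open_in_Rn n U \<and> P ` U \<subseteq> X"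

definition diffeology :: "'a set \<Rightarrow> 'a diffeology \<Rightarrow> bool" where
  "diffeology X D \<longleftrightarrow>
     (\<forall>n U P. (n, U, P) \<in> D \<longrightarrow> parametrization X n U P)
   \<and> (\<forall>n U P Q. (n, U, P) \<in> D \<longrightarrow> (\<forall>x\<in>U. P x = Q x) \<longrightarrow> (n, U, Q) \<in> D)
   \<and> (\<forall>n U x. open_in_Rn n U \<longrightarrow> x \<in> X \<longrightarrow> (n, U, \<lambda>_. x) \<in> D)
   \<and> (\<forall>n U P. parametrization X n U P \<longrightarrow>
        (\<forall>r\<in>U. \<exists>V. open_in_Rn n V \<and> r \<in> V \<and> V \<subseteq> U \<and> (n, V, P) \<in> D) \<longrightarrow> (n, U, P) \<in> D)
   \<and> (\<forall>n U P m V F. (n, U, P) \<in> D \<longrightarrow> open_in_Rn m V \<longrightarrow> smooth_map m n V F \<longrightarrow> F ` V \<subseteq> U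
        \<longrightarrow> (m, V, P \<circ> F) \<in> D)"

definition smooth_real :: "'a set \<Rightarrow> 'a diffeology \<Rightarrow> ('a \<Rightarrow> real) \<Rightarrow> bool" where
  "smooth_real X D g \<longleftrightarrow> (\<forall>n U P. (n, U, P) \<in> D \<longrightarrow> Cinf n U (g \<circ> P))"

definition reflexive :: "'a set \<Rightarrow> 'a diffeology \<Rightarrow> bool" where
  "reflexive X D \<longleftrightarrow>
     (\<forall>n U P. parametrization X n U P \<longrightarrow>
        (\<forall>g. smooth_real X D g \<longrightarrow> Cinf n U (g \<circ> P)) \<longrightarrow> (n, U, P) \<in> D)"

text \<open>Xs 0 = X^(-1) = {}, Xs (Suc n) = X^(n); all Xs k are subsets of X carrying the subset
diffeology {(m,V,P) \<in> D. P ` V \<subseteq> Xs k}.  J n is the index set of n-cells and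
h n j : S^{n-1,0} \<rightarrow> X^(n-1) the attaching map of the j-th n-cell.\<close>

definition attaching_smooth ::
  "'a diffeology \<Rightarrow> (nat \<Rightarrow> 'a set) \<Rightarrow> nat \<Rightarrow> ((nat \<Rightarrow> real) \<Rightarrow> 'a) \<Rightarrow> bool" where
  "attaching_smooth D Xs n f \<longleftrightarrow>
     (\<forall>m V Q. open_in_Rn m V \<longrightarrow> smooth_map m n V Q \<longrightarrow> Q ` V \<subseteq> Sn0 n \<longrightarrow>
        (m, V, f \<circ> Q) \<in> D \<and> (f \<circ> Q) ` V \<subseteq> Xs n)"

text \<open>X^(n) is the pushout, in diffeological spaces, of the inclusion
\<coprod>_j S^{n-1,0} \<hookrightarrow> \<coprod>_j R^n and of h_n, with the inclusion X^(n-1) \<subseteq> X^(n) as one leg and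
Phi (the characteristic maps) as the other.  Written out: as a set, X^(n) is the disjoint
union of X^(n-1) and the Phi-image of the open cells, Phi being injective there and equal to
h on S^{n-1,0}; its diffeology is the quotient (pushforward) diffeology of
X^(n-1) \<amalg> \<coprod>_j R^n, i.e. plots are the parametrizations that locally are plots of X^(n-1)
or of the form Phi(j, Q) with Q a smooth map into R^n.\<close>
definition cell_pushout ::
  "'a set \<Rightarrow> 'a diffeology \<Rightarrow> (nat \<Rightarrow> 'a set) \<Rightarrow> nat \<Rightarrow> 'j set \<Rightarrow> ('j \<Rightarrow> (nat \<Rightarrow> real) \<Rightarrow> 'a)
     \<Rightarrow> ('j \<Rightarrow> (nat \<Rightarrow> real) \<Rightarrow> 'a) \<Rightarrow> bool" where
  "cell_pushout X D Xs n Jn hn Phi \<longleftrightarrow>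
     Xs n \<subseteq> Xs (Suc n) \<and> Xs (Suc n) \<subseteq> X
   \<and> (\<forall>j\<in>Jn. \<forall>u\<in>Sn0 n. Phi j u = hn j u)
   \<and> Xs (Suc n) = Xs n \<union> (\<lambda>(j, u). Phi j u) ` (Jn \<times> Bn0 n)
   \<and> inj_on (\<lambda>(j, u). Phi j u) (Jn \<times> Bn0 n)
   \<and> (\<lambda>(j, u). Phi j u) ` (Jn \<times> Bn0 n) \<inter> Xs n = {}
   \<and> (\<forall>m V P. parametrization (Xs (Suc n)) m V P \<longrightarrow>
        ((m, V, P) \<in> D \<longleftrightarrow>
         (\<forall>r\<in>V. \<exists>W. open_in_Rn m W \<and> r \<in> W \<and> W \<subseteq> V \<and>
            (((m, W, P) \<in> D \<and> P ` W \<subseteq> Xs n)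
             \<or> (\<exists>j\<in>Jn. \<exists>Q. smooth_map m n W Q \<and> (\<forall>w\<in>W. P w = Phi j (Q w)))))))"

text \<open>X is the diffeological colimit of the X^(n): as a set the union, and plots are the
parametrizations which locally are plots of some X^(n).\<close>
definition colimit_diffeology :: "'a set \<Rightarrow> 'a diffeology \<Rightarrow> (nat \<Rightarrow> 'a set) \<Rightarrow> bool" where
  "colimit_diffeology X D Xs \<longleftrightarrow>
     X = (\<Union>k. Xs k)
   \<and> (\<forall>m V P. parametrization X m V P \<longrightarrow>
        ((m, V, P) \<in> D \<longleftrightarrow>
         (\<forall>r\<in>V. \<exists>W. open_in_Rn m W \<and> r \<in> W \<and> W \<subseteq> V \<and>
            (\<exists>k. (m, W, P) \<in> D \<and> P ` W \<subseteq> Xs k))))"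

definition thin_CW ::
  "'a set \<Rightarrow> 'a diffeology \<Rightarrow> (nat \<Rightarrow> 'a set) \<Rightarrow> (nat \<Rightarrow> 'j set) \<Rightarrow> (nat \<Rightarrow> 'j \<Rightarrow> (nat \<Rightarrow> real) \<Rightarrow> 'a) \<Rightarrow> bool" where
  "thin_CW X D Xs J h \<longleftrightarrow>
     diffeology X D
   \<and> Xs 0 = {}
   \<and> (\<forall>n. \<forall>j\<in>J n. attaching_smooth D Xs n (h n j))
   \<and> (\<forall>n. \<exists>Phi. cell_pushout X D Xs n (J n) (h n) Phi)
   \<and> colimit_diffeology X D Xs"

end

theory Submission
  imports Defs
begin

definition emb0 :: "real \<Rightarrow> nat \<Rightarrow> real" where
  "emb0 s = (\<lambda>i. if i = 0 then s else 0)"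

fun D1 :: "nat \<Rightarrow> real set \<Rightarrow> (real \<Rightarrow> real) \<Rightarrow> bool" where
  "D1 0 I f = continuous_on I f"
| "D1 (Suc k) I f = (continuous_on I f \<and>
     (\<exists>f'. (\<forall>x\<in>I. (f has_real_derivative f' x) (at x)) \<and> D1 k I f'))"

lemma emb0_0 [simp]: "emb0 s 0 = s" by (simp add: emb0_def)

lemma emb0_upd [simp]: "(emb0 a)(0 := b) = emb0 b"
  by (auto simp: emb0_def fun_eq_iff)

lemma continuous_emb0: "continuous_on A emb0"
  apply (rule continuous_on_coordinatewise_then_product)
  apply (simp add: emb0_def)
  apply (case_tac "i = 0") apply (auto intro: continuous_intros)
  done

lemma cont_transfer:
  "continuous_on (emb0 ` I) G \<longleftrightarrow> continuous_on I (G \<circ> emb0)"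
proof
  assume "continuous_on (emb0 ` I) G"
  then show "continuous_on I (G \<circ> emb0)"
    by (rule continuous_on_compose[OF continuous_emb0])
next
  assume a: "continuous_on I (G \<circ> emb0)"
  have "continuous_on (emb0 ` I) ((G \<circ> emb0) \<circ> (\<lambda>x. x 0))"
    apply (rule continuous_on_compose)
     apply (rule continuous_on_subset[OF continuous_on_product_coordinates], simp)
    using a by (simp add: image_image)
  then show "continuous_on (emb0 ` I) G"
    by (rule continuous_on_eq) auto
qed

lemma deriv_transfer:
  "((\<lambda>t. G ((emb0 a)(0 := emb0 a 0 + t))) has_real_derivative D) (at 0)
   \<longleftrightarrow> ((G \<circ> emb0) has_real_derivative D) (at a)"
  using DERIV_shift[of "G \<circ> emb0" D 0 a] by (simp add: add.commute)

lemma Ck_transfer: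
  "Ck k (Suc 0) (emb0 ` I) G \<longleftrightarrow> D1 k I (G \<circ> emb0)"
proof (induction k arbitrary: G)
  case 0
  then show ?case by (simp add: cont_transfer)
next
  case (Suc k)
  show ?case
  proof
    assume "Ck (Suc k) (Suc 0) (emb0 ` I) G"
    then obtain g' where c: "continuous_on (emb0 ` I) G"
      and d: "\<forall>x\<in>emb0 ` I. ((\<lambda>t. G (x(0 := x 0 + t))) has_real_derivative g' x) (at 0)"
      and k: "Ck k (Suc 0) (emb0 ` I) g'" by auto
    have "\<forall>a\<in>I. ((G \<circ> emb0) has_real_derivative (g' \<circ> emb0) a) (at a)"
      using d deriv_transfer by auto
    then show "D1 (Suc k) I (G \<circ> emb0)"
      using c k Suc.IH cont_transfer by auto
  next
    assume "D1 (Suc k) I (G \<circ> emb0)"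
    then obtain f' where c: "continuous_on I (G \<circ> emb0)"
      and d: "\<forall>x\<in>I. ((G \<circ> emb0) has_real_derivative f' x) (at x)"
      and k: "D1 k I f'" by auto
    define g' where "g' = (\<lambda>x::nat\<Rightarrow>real. f' (x 0))"
    have "g' \<circ> emb0 = f'" by (auto simp: g'_def)
    then have "Ck k (Suc 0) (emb0 ` I) g'" using k Suc.IH by (simp add: comp_def)
    moreover have "\<forall>x\<in>emb0 ` I. ((\<lambda>t. G (x(0 := x 0 + t))) has_real_derivative g' x) (at 0)"
      using d deriv_transfer g'_def by auto
    ultimately show "Ck (Suc k) (Suc 0) (emb0 ` I) G"
      using c cont_transfer by auto
  qed
qed

lemma D1_cont: "D1 k I f \<Longrightarrow> continuous_on I f"
  by (cases k) auto

lemma D1_cong: "open I \<Longrightarrow> (\<forall>x\<in>I. f x = g x) \<Longrightarrow> D1 k I f \<Longrightarrow> D1 k I g"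
proof (induction k arbitrary: f g)
  case 0
  then show ?case using continuous_on_eq by auto
next
  case (Suc k)
  then obtain f' where c: "continuous_on I f" and d: "\<forall>x\<in>I. (f has_real_derivative f' x) (at x)"
    and k: "D1 k I f'" by auto
  have "\<forall>x\<in>I. (g has_real_derivative f' x) (at x)"
    using d Suc.prems(1,2) has_field_derivative_transform_within_open by metis
  then show ?case using k c continuous_on_eq Suc.prems(2) by auto
qed

lemma D1_deriv:
  assumes "open I" "D1 (Suc k) I f" "\<forall>x\<in>I. (f has_real_derivative f' x) (at x)"
  shows "D1 k I f'"
proof -
  obtain f'' where d: "\<forall>x\<in>I. (f has_real_derivative f'' x) (at x)" and k: "D1 k I f''"
    using assms(2) by auto
  have "\<forall>x\<in>I. f'' x = f' x" using d assms(3) DERIV_unique by blast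
  then show ?thesis using D1_cong[OF assms(1)] k by blast
qed

lemma D1_const: "D1 k I (\<lambda>_. c)"
  by (induction k arbitrary: c) (auto intro!: exI[of _ "\<lambda>_. 0"])

lemma D1_id: "D1 k I (\<lambda>x. x)"
  by (cases k) (auto intro!: exI[of _ "\<lambda>_. 1"] D1_const continuous_intros)

definition fld :: "real \<Rightarrow> real \<Rightarrow> (real \<Rightarrow> real) \<Rightarrow> real \<Rightarrow> real" where
  "fld a b f t = (if 0 \<le> t then a * f (1 - t) else b * f (1 + t))"

lemma zero_at_1:
  fixes f :: "real \<Rightarrow> real"
  assumes "continuous_on UNIV f" "\<forall>s>1. f s = c"
  shows "f 1 = c"
  using continuous_constant_on_closure[of "{1<..}" f c 1] assms
  by (auto intro: continuous_on_subset)

lemma fold_cont: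
  assumes "continuous_on UNIV f" "a * f 1 = b * f 1"
  shows "continuous_on UNIV (fld a b f)"
proof -
  have "continuous_on ({0..} \<union> {..0}) (\<lambda>t. if 0 \<le> t then a * f (1 - t) else b * f (1 + t))"
  proof (rule continuous_on_cases)
    show "continuous_on {0..} (\<lambda>t. a * f (1 - t))"
      by (intro continuous_intros continuous_on_compose2[OF assms(1)]) auto
    show "continuous_on {..0} (\<lambda>t. b * f (1 + t))"
      by (intro continuous_intros continuous_on_compose2[OF assms(1)]) auto
  qed (use assms(2) in auto)
  moreover have "{0..} \<union> {..0} = (UNIV::real set)" by auto
  ultimately show ?thesis unfolding fld_def[abs_def] by simp
qed

lemma fold_deriv:
  assumes d: "\<forall>x. (f has_real_derivative f' x) (at x)" and ab: "a * f 1 = b * f 1"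
    and z: "f' 1 = 0"
  shows "(fld a b f has_real_derivative fld (-a) b f' t) (at t)"
proof -
  have R: "((\<lambda>t. a * f (1 - t)) has_real_derivative (- a) * f' (1 - t)) (at t)" for t
  proof -
    have "((\<lambda>t. f (1 - t)) has_real_derivative f' (1 - t) * (-1)) (at t)"
      by (rule DERIV_chain2[OF d[rule_format]]) (auto intro!: derivative_eq_intros)
    from DERIV_cmult[OF this, of a] show ?thesis by simp
  qed
  have L: "((\<lambda>t. b * f (1 + t)) has_real_derivative b * f' (1 + t)) (at t)" for t
  proof -
    have "((\<lambda>t. f (1 + t)) has_real_derivative f' (1 + t) * 1) (at t)"
      by (rule DERIV_chain2[OF d[rule_format]]) (auto intro!: derivative_eq_intros)
    from DERIV_cmult[OF this, of b] show ?thesis by simp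
  qed
  consider "t > 0" | "t < 0" | "t = 0" by linarith
  then show ?thesis
  proof cases
    case 1
    have "(fld a b f has_real_derivative (- a) * f' (1 - t)) (at t)"
      apply (rule has_field_derivative_transform_within_open[OF R, of "{0<..}"])
      using 1 by (auto simp: fld_def)
    then show ?thesis using 1 by (simp add: fld_def)
  next
    case 2
    have "(fld a b f has_real_derivative b * f' (1 + t)) (at t)"
      apply (rule has_field_derivative_transform_within_open[OF L, of "{..<0}"])
      using 2 by (auto simp: fld_def)
    then show ?thesis using 2 by (simp add: fld_def)
  next
    case 3
    have fv: "fld (-a) b f' 0 = 0" using z by (simp add: fld_def)
    have R0: "((\<lambda>y. (a * f (1 - y) - a * f (1 - 0)) / (y - 0)) \<longlongrightarrow> 0) (at 0)"
      using R[of 0] z unfolding has_field_derivative_iff by simp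
    have L0: "((\<lambda>y. (b * f (1 + y) - b * f (1 + 0)) / (y - 0)) \<longlongrightarrow> 0) (at 0)"
      using L[of 0] z unfolding has_field_derivative_iff by simp
    have "((\<lambda>y. (fld a b f y - fld a b f 0) / (y - 0)) \<longlongrightarrow> 0) (at_right 0)"
    proof (rule Lim_transform_eventually)
      show "((\<lambda>y. (a * f (1 - y) - a * f (1 - 0)) / (y - 0)) \<longlongrightarrow> 0) (at_right 0)"
        by (rule tendsto_mono[OF at_le R0]) simp
      show "\<forall>\<^sub>F x in at_right 0. (a * f (1 - x) - a * f (1 - 0)) / (x - 0) =
            (fld a b f x - fld a b f 0) / (x - 0)"
        using eventually_at_right_less[of "0::real"]
        by eventually_elim (simp add: fld_def)
    qed
    moreover have "((\<lambda>y. (fld a b f y - fld a b f 0) / (y - 0)) \<longlongrightarrow> 0) (at_left 0)"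
    proof (rule Lim_transform_eventually)
      show "((\<lambda>y. (b * f (1 + y) - b * f (1 + 0)) / (y - 0)) \<longlongrightarrow> 0) (at_left 0)"
        by (rule tendsto_mono[OF at_le L0]) simp
      show "\<forall>\<^sub>F x in at_left 0. (b * f (1 + x) - b * f (1 + 0)) / (x - 0) =
            (fld a b f x - fld a b f 0) / (x - 0)"
      proof -
        have ev: "\<forall>\<^sub>F x in at_left (0::real). x < 0"
          by (rule eventually_at_leftI[of "-1"]) auto
        show ?thesis using ev by eventually_elim (use ab in \<open>auto simp: fld_def\<close>)
      qed
    qed
    ultimately have "((\<lambda>y. (fld a b f y - fld a b f 0) / (y - 0)) \<longlongrightarrow> 0) (at 0)"
      using filterlim_at_split by blast
    then show ?thesis using 3 fv unfolding has_field_derivative_iff by simp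
  qed
qed

lemma ab_lemma:
  fixes f :: "real \<Rightarrow> real"
  assumes "continuous_on UNIV f" "a = b \<or> (\<forall>s>1. f s = 0)"
  shows "a * f 1 = b * f 1"
proof (cases "a = b")
  case False
  then have "\<forall>s>1. f s = 0" using assms(2) by blast
  then have "f 1 = 0" using zero_at_1[OF assms(1)] by blast
  then show ?thesis by simp
qed simp

lemma fold_D1:
  "\<forall>f a b. D1 k UNIV f \<longrightarrow> (\<forall>s>1. \<exists>e>0. \<forall>t. \<bar>t - s\<bar> < e \<longrightarrow> f t = f s)
     \<longrightarrow> (a = b \<or> (\<forall>s>1. f s = 0)) \<longrightarrow> D1 k UNIV (fld a b f)"
proof (induction k)
  case 0
  show ?case
  proof (intro allI impI)
    fix f :: "real \<Rightarrow> real" and a b :: real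
    assume h: "D1 0 UNIV f" "a = b \<or> (\<forall>s>1. f s = 0)"
    have c: "continuous_on UNIV f" using h(1) by simp
    have "continuous_on UNIV (fld a b f)" by (rule fold_cont[OF c ab_lemma[OF c h(2)]])
    then show "D1 0 UNIV (fld a b f)" by simp
  qed
next
  case (Suc k)
  show ?case
  proof (intro allI impI)
    fix f :: "real \<Rightarrow> real" and a b :: real
    assume h: "D1 (Suc k) UNIV f" and lc: "\<forall>s>1. \<exists>e>0. \<forall>t. \<bar>t - s\<bar> < e \<longrightarrow> f t = f s"
      and ab0: "a = b \<or> (\<forall>s>1. f s = 0)"
    from h obtain f' where c: "continuous_on UNIV f" and d0: "\<forall>x\<in>UNIV. (f has_real_derivative f' x) (at x)"
      and k: "D1 k UNIV f'" by (simp only: D1.simps) blast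
    have d: "\<forall>x. (f has_real_derivative f' x) (at x)" using d0 by blast
    have ab: "a * f 1 = b * f 1" by (rule ab_lemma[OF c ab0])
    have f'0: "f' s = 0" if s1: "s > 1" for s
    proof -
      obtain e where e: "e > 0" "\<forall>t. \<bar>t - s\<bar> < e \<longrightarrow> f t = f s"
        using lc[rule_format, OF s1] by blast
      have "((\<lambda>_. f s) has_real_derivative 0) (at s)" by (rule DERIV_const)
      then have "(f has_real_derivative 0) (at s)"
      proof (rule has_field_derivative_transform_within_open[of _ _ _ "ball s e"])
        show "open (ball s e)" by simp
        show "s \<in> ball s e" using e(1) by simp
        fix x assume "x \<in> ball s e"
        then have "\<bar>x - s\<bar> < e" by (simp add: dist_real_def abs_minus_commute)
        then show "f s = f x" using e(2) by metis
      qed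
      from DERIV_unique[OF d[rule_format] this] show ?thesis .
    qed
    have z: "f' 1 = 0" by (rule zero_at_1[OF D1_cont[OF k]]) (use f'0 in blast)
    have lc': "\<forall>s>1. \<exists>e>0. \<forall>t. \<bar>t - s\<bar> < e \<longrightarrow> f' t = f' s"
    proof (intro allI impI)
      fix s :: real assume s1: "s > 1"
      show "\<exists>e>0. \<forall>t. \<bar>t - s\<bar> < e \<longrightarrow> f' t = f' s"
      proof (intro exI[of _ "s - 1"] conjI allI impI)
        show "0 < s - 1" using s1 by simp
        fix t assume "\<bar>t - s\<bar> < s - 1"
        then have "t > 1" by linarith
        then show "f' t = f' s" using f'0 s1 by simp
      qed
    qed
    have "D1 k UNIV (fld (-a) b f')"
      by (rule Suc.IH[rule_format, OF k]) (use lc' f'0 in auto)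
    moreover have "\<forall>x\<in>UNIV. (fld a b f has_real_derivative fld (-a) b f' x) (at x)"
      using fold_deriv[OF d ab z] by blast
    moreover have "continuous_on UNIV (fld a b f)" using fold_cont[OF c ab] .
    ultimately show "D1 (Suc k) UNIV (fld a b f)" by (simp only: D1.simps) blast
  qed
qed

lemma abs_not_deriv:
  fixes q :: "real \<Rightarrow> real"
  assumes d: "(q has_real_derivative D) (at 0)" and e: "e > 0"
    and eq: "\<forall>t. 0 < \<bar>t\<bar> \<and> \<bar>t\<bar> < e \<longrightarrow> q t = 1 - \<bar>t\<bar>"
  shows False
proof -
  have ev: "\<forall>\<^sub>F t in at 0. q t = 1 - \<bar>t\<bar>"
    unfolding eventually_at using e eq by (intro exI[of _ e]) (auto simp: dist_real_def)
  have "((\<lambda>t::real. 1 - \<bar>t\<bar>) \<longlongrightarrow> 1 - \<bar>0\<bar>) (at 0)"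
    by (intro tendsto_intros)
  then have "(q \<longlongrightarrow> 1) (at 0)"
    using Lim_transform_eventually[OF _ ev[THEN eventually_mono, of "\<lambda>t. 1 - \<bar>t\<bar> = q t"]] by auto
  moreover have "(q \<longlongrightarrow> q 0) (at 0)" using DERIV_isCont[OF d] by (simp add: isCont_def)
  ultimately have q0: "q 0 = 1" using tendsto_unique[OF at_neq_bot] by metis
  have Q: "((\<lambda>h. (q (0 + h) - q 0) / h) \<longlongrightarrow> D) (at 0)" using d by (simp add: DERIV_def)
  have evr: "\<forall>\<^sub>F h in at_right 0. (q (0 + h) - q 0) / h = -1"
  proof (rule eventually_at_rightI[where a="0::real" and b=e])
    fix h assume "h \<in> {0<..<e}"
    then show "(q (0 + h) - q 0) / h = -1" using eq q0 by auto
  qed (use e in auto)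
  have evl: "\<forall>\<^sub>F h in at_left 0. (q (0 + h) - q 0) / h = 1"
  proof (rule eventually_at_leftI[where a="-e" and b="0::real"])
    fix h assume "h \<in> {-e<..<0}"
    then have "q h = 1 + h" using eq[rule_format, of h] by auto
    then show "(q (0 + h) - q 0) / h = 1" using q0 \<open>h \<in> {-e<..<0}\<close> by auto
  qed (use e in auto)
  have "((\<lambda>h. (q (0 + h) - q 0) / h) \<longlongrightarrow> D) (at_right 0)"
    by (rule tendsto_mono[OF at_le Q]) simp
  moreover have "((\<lambda>h. (q (0 + h) - q 0) / h) \<longlongrightarrow> -1) (at_right 0)"
    using tendsto_eventually[OF evr] by simp
  ultimately have D1: "D = -1" using tendsto_unique[OF trivial_limit_at_right_real] by blast
  have "((\<lambda>h. (q (0 + h) - q 0) / h) \<longlongrightarrow> D) (at_left 0)"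
    by (rule tendsto_mono[OF at_le Q]) simp
  moreover have "((\<lambda>h. (q (0 + h) - q 0) / h) \<longlongrightarrow> 1) (at_left 0)"
    using tendsto_eventually[OF evl] by simp
  ultimately have "D = 1" using tendsto_unique[OF trivial_limit_at_left_real] by blast
  with D1 show False by simp
qed

lemma emb0_Rn: "1 \<le> n \<Longrightarrow> emb0 s \<in> Rn n"
  by (auto simp: Rn_def emb0_def)

lemma sqnorm_emb0: "1 \<le> n \<Longrightarrow> sqnorm n (emb0 s) = s^2"
proof -
  assume n: "1 \<le> n"
  have "(\<lambda>i. (emb0 s i)^2) = (\<lambda>i. if i = 0 then s^2 else 0)"
    by (auto simp: emb0_def fun_eq_iff)
  then have "(\<Sum>i<n. (emb0 s i)^2) = (\<Sum>i<n. if i = 0 then s^2 else 0)" by metis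
  also have "\<dots> = s^2" using n by (simp add: sum.delta)
  finally show ?thesis by (simp add: sqnorm_def)
qed

lemma Rn1_emb: "x \<in> Rn (Suc 0) \<Longrightarrow> emb0 (x 0) = x"
  by (auto simp: Rn_def emb0_def fun_eq_iff)

lemma open_emb_image: "open I \<Longrightarrow> open_in_Rn (Suc 0) (emb0 ` I)"
proof -
  assume I: "open I"
  have eq: "emb0 ` I = Rn (Suc 0) \<inter> (UNIV \<inter> (\<lambda>x. x 0) -` I)"
  proof
    show "emb0 ` I \<subseteq> Rn (Suc 0) \<inter> (UNIV \<inter> (\<lambda>x. x 0) -` I)"
      using emb0_Rn[of "Suc 0"] by auto
    show "Rn (Suc 0) \<inter> (UNIV \<inter> (\<lambda>x. x 0) -` I) \<subseteq> emb0 ` I"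
    proof
      fix x assume "x \<in> Rn (Suc 0) \<inter> (UNIV \<inter> (\<lambda>x. x 0) -` I)"
      then show "x \<in> emb0 ` I" using Rn1_emb[of x] by (auto intro: image_eqI[of _ _ "x 0"])
    qed
  qed
  have "open (UNIV \<inter> (\<lambda>x::nat\<Rightarrow>real. x 0) -` I)"
    using open_vimage[OF I continuous_on_product_coordinates] by simp
  then show ?thesis unfolding open_in_Rn_def eq
    by (auto intro: openin_open_Int)
qed

lemma open_preimage:
  assumes "open_in_Rn (Suc 0) W"
  shows "open (emb0 -` W)" "W = emb0 ` (emb0 -` W)"
proof -
  obtain T where T: "open T" "W = Rn (Suc 0) \<inter> T"
    using assms unfolding open_in_Rn_def openin_open by blast
  have "emb0 -` W = UNIV \<inter> emb0 -` T" using T(2) emb0_Rn[of "Suc 0"] by auto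
  moreover have "open (UNIV \<inter> emb0 -` T)"
    using open_vimage[OF T(1) continuous_emb0] by simp
  ultimately show "open (emb0 -` W)" by simp
  show "W = emb0 ` (emb0 -` W)"
  proof
    show "W \<subseteq> emb0 ` (emb0 -` W)"
    proof
      fix x assume x: "x \<in> W"
      then have "x \<in> Rn (Suc 0)" using T(2) by auto
      then have "emb0 (x 0) = x" by (rule Rn1_emb)
      then show "x \<in> emb0 ` (emb0 -` W)" using x by (auto intro: image_eqI[of _ _ "x 0"])
    qed
  qed auto
qed

lemma open_emb_nbhd:
  assumes "open_in_Rn (Suc 0) W" "emb0 s \<in> W"
  shows "\<exists>e>0. \<forall>t. \<bar>t - s\<bar> < e \<longrightarrow> emb0 t \<in> W"
proof -
  have "open (emb0 -` W)" by (rule open_preimage(1)[OF assms(1)])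
  moreover have "s \<in> emb0 -` W" using assms(2) by simp
  ultimately obtain e where "e > 0" "\<forall>t. \<bar>t - s\<bar> < e \<longrightarrow> t \<in> emb0 -` W"
    unfolding open_real by blast
  then show ?thesis by auto
qed

lemma Ck_const: "Ck k m V (\<lambda>_. c)"
  by (induction k arbitrary: c) (auto intro!: exI[of _ "\<lambda>_. 0"])

lemma Rn0: "Rn 0 = {\<lambda>_. 0}" by (auto simp: Rn_def fun_eq_iff)

lemma open_Rn: "open_in_Rn n (Rn n)"
  unfolding open_in_Rn_def by (metis openin_topspace topspace_euclidean_subtopology subset_refl)

lemma att_in:
  assumes "attaching_smooth D Xs n f" "u \<in> Sn0 n"
  shows "f u \<in> Xs n"
proof -
  have sm: "smooth_map 0 n (Rn 0) (\<lambda>_. u)"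
    using assms(2) unfolding smooth_map_def Sn0_def Cinf_def by (auto intro: Ck_const)
  have "(0, Rn 0, f \<circ> (\<lambda>_. u)) \<in> D \<and> (f \<circ> (\<lambda>_. u)) ` Rn 0 \<subseteq> Xs n"
    using assms(1) open_Rn[of 0] sm assms(2) unfolding attaching_smooth_def by blast
  then show ?thesis using Rn0 by auto
qed

lemma smooth_L: "1 \<le> n \<Longrightarrow> smooth_map (Suc 0) n (emb0 ` I) (\<lambda>x. emb0 (x 0))"
  unfolding smooth_map_def Cinf_def
proof (intro conjI ballI allI impI)
  fix v assume "1 \<le> n" show "emb0 (v 0) \<in> Rn n" by (rule emb0_Rn) fact
next
  fix j k assume "j < n"
  have "(\<lambda>v. emb0 (v 0) j) \<circ> emb0 = (\<lambda>s. if j = 0 then s else 0)"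
    by (auto simp: emb0_def fun_eq_iff)
  moreover have "D1 k I (\<lambda>s. if j = 0 then s else 0)"
    by (cases "j = 0") (simp_all add: D1_id D1_const)
  ultimately show "Ck k (Suc 0) (emb0 ` I) (\<lambda>v. emb0 (v 0) j)"
    by (simp add: Ck_transfer)
qed

lemma po_plot:
  assumes "cell_pushout X D Xs n Jn hn Phi" "parametrization (Xs (Suc n)) m V P"
  shows "(m, V, P) \<in> D \<longleftrightarrow>
         (\<forall>r\<in>V. \<exists>W. open_in_Rn m W \<and> r \<in> W \<and> W \<subseteq> V \<and>
            (((m, W, P) \<in> D \<and> P ` W \<subseteq> Xs n)
             \<or> (\<exists>j\<in>Jn. \<exists>Q. smooth_map m n W Q \<and> (\<forall>w\<in>W. P w = Phi j (Q w)))))"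
  using assms unfolding cell_pushout_def by blast

lemma LC:
  assumes po0: "cell_pushout X D Xs 0 J0 h0 Phi0" and X0: "Xs 0 = {}"
    and P: "(Suc 0, V, P) \<in> D" "open_in_Rn (Suc 0) V" "P ` V \<subseteq> Xs (Suc 0)" "r \<in> V"
  shows "\<exists>W. open_in_Rn (Suc 0) W \<and> r \<in> W \<and> W \<subseteq> V \<and> (\<forall>w\<in>W. P w = P r)"
proof -
  have par: "parametrization (Xs (Suc 0)) (Suc 0) V P" using P by (simp add: parametrization_def)
  from po_plot[OF po0 par] P(1) P(4) obtain W where W: "open_in_Rn (Suc 0) W" "r \<in> W" "W \<subseteq> V"
    and alt: "((Suc 0, W, P) \<in> D \<and> P ` W \<subseteq> Xs 0)
             \<or> (\<exists>j\<in>J0. \<exists>Q. smooth_map (Suc 0) 0 W Q \<and> (\<forall>w\<in>W. P w = Phi0 j (Q w)))"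
    by blast
  from alt have "\<forall>w\<in>W. P w = P r"
  proof
    assume "(Suc 0, W, P) \<in> D \<and> P ` W \<subseteq> Xs 0"
    then show ?thesis using X0 W(2) by auto
  next
    assume "\<exists>j\<in>J0. \<exists>Q. smooth_map (Suc 0) 0 W Q \<and> (\<forall>w\<in>W. P w = Phi0 j (Q w))"
    then obtain j Q where Q: "smooth_map (Suc 0) 0 W Q" "\<forall>w\<in>W. P w = Phi0 j (Q w)" by blast
    have "\<forall>w\<in>W. Q w = (\<lambda>_. 0)" using Q(1) Rn0 unfolding smooth_map_def by auto
    then show ?thesis using Q(2) W(2) by auto
  qed
  then show ?thesis using W by blast
qed

lemma po_parts:
  assumes "cell_pushout X D Xs n Jn hn Phi"
  shows "Xs n \<subseteq> Xs (Suc n)" "Xs (Suc n) \<subseteq> X" "\<forall>j\<in>Jn. \<forall>u\<in>Sn0 n. Phi j u = hn j u"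
    "Xs (Suc n) = Xs n \<union> (\<lambda>(j, u). Phi j u) ` (Jn \<times> Bn0 n)"
    "inj_on (\<lambda>(j, u). Phi j u) (Jn \<times> Bn0 n)"
    "(\<lambda>(j, u). Phi j u) ` (Jn \<times> Bn0 n) \<inter> Xs n = {}"
  using assms unfolding cell_pushout_def
  apply -
  apply (elim conjE, assumption)+
  done

theorem corollary8p4:
  fixes X :: "'a set" and D :: "'a diffeology" and Xs :: "nat \<Rightarrow> 'a set"
    and J :: "nat \<Rightarrow> 'j set" and h :: "nat \<Rightarrow> 'j \<Rightarrow> (nat \<Rightarrow> real) \<Rightarrow> 'a"
  assumes "thin_CW X D Xs J h"
    and "\<exists>n\<ge>1. J n \<noteq> {}"
  shows "\<not> reflexive X D"
proof
  assume refl: "reflexive X D"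
  have X0: "Xs 0 = {}" using assms(1) unfolding thin_CW_def by (elim conjE) assumption
  have att: "\<forall>n. \<forall>j\<in>J n. attaching_smooth D Xs n (h n j)"
    using assms(1) unfolding thin_CW_def by (elim conjE) assumption
  have po: "\<forall>n. \<exists>Phi. cell_pushout X D Xs n (J n) (h n) Phi"
    using assms(1) unfolding thin_CW_def by (elim conjE) assumption
  define n where "n = (LEAST n. 1 \<le> n \<and> J n \<noteq> {})"
  have n: "1 \<le> n" "J n \<noteq> {}" using LeastI_ex[OF assms(2)] unfolding n_def by auto
  have min: "J k = {}" if "1 \<le> k" "k < n" for k
    using not_less_Least[of k "\<lambda>n. 1 \<le> n \<and> J n \<noteq> {}"] that unfolding n_def by auto
  have Xsk: "1 \<le> k \<longrightarrow> k \<le> n \<longrightarrow> Xs k = Xs (Suc 0)" for k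
  proof (induction k)
    case 0
    then show ?case by simp
  next
    case (Suc k)
    show ?case
    proof (cases "k = 0")
      case True
      then show ?thesis by simp
    next
      case False
      show ?thesis
      proof (intro impI)
        assume "Suc k \<le> n"
        then have k: "1 \<le> k" "k < n" using False by auto
        then have Jk: "J k = {}" by (rule min)
        obtain Phik where "cell_pushout X D Xs k (J k) (h k) Phik" using po by blast
        then have "Xs (Suc k) = Xs k \<union> (\<lambda>(j, u). Phik j u) ` (J k \<times> Bn0 k)"
          by (rule po_parts(4))
        then have "Xs (Suc k) = Xs k" using Jk by simp
        then show "Xs (Suc k) = Xs (Suc 0)" using Suc.IH k by simp
      qed
    qed
  qed
  have Xsn: "Xs n = Xs (Suc 0)" using Xsk[of n] n(1) by simp
  obtain j where j: "j \<in> J n" using n(2) by blast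
  obtain Phi where po_n: "cell_pushout X D Xs n (J n) (h n) Phi" using po by blast
  obtain Phi0 where po0: "cell_pushout X D Xs 0 (J 0) (h 0) Phi0" using po by blast
  have sub1: "Xs n \<subseteq> Xs (Suc n)"
    using po_parts(1)[OF po_n] .
  have sub2: "Xs (Suc n) \<subseteq> X"
    using po_parts(2)[OF po_n] .
  have bd: "\<forall>j\<in>J n. \<forall>u\<in>Sn0 n. Phi j u = h n j u"
    using po_parts(3)[OF po_n] .
  have img: "Xs (Suc n) = Xs n \<union> (\<lambda>(j, u). Phi j u) ` (J n \<times> Bn0 n)"
    using po_parts(4)[OF po_n] .
  have inj: "inj_on (\<lambda>(j, u). Phi j u) (J n \<times> Bn0 n)"
    using po_parts(5)[OF po_n] .
  have disj: "(\<lambda>(j, u). Phi j u) ` (J n \<times> Bn0 n) \<inter> Xs n = {}"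
    using po_parts(6)[OF po_n] .
  have F3: "Phi j' u \<in> Xs n" if "j' \<in> J n" "u \<in> Sn0 n" for j' u
    using bd att_in[of D Xs n "h n j'" u] att that by auto
  have F2: "Phi j' u \<notin> Xs n" if "j' \<in> J n" "u \<in> Bn0 n" for j' u
    using disj that by blast
  have embB: "emb0 s \<in> Bn0 n" if "\<bar>s\<bar> < 1" for s
    using that n(1) emb0_Rn[of n s] sqnorm_emb0[of n s] abs_square_less_1[of s]
    by (simp add: Bn0_def)
  have embS: "emb0 s \<in> Sn0 n" if "\<not> \<bar>s\<bar> < 1" for s
    using that n(1) emb0_Rn[of n s] sqnorm_emb0[of n s] abs_square_less_1[of s]
    by (simp add: Sn0_def)
  have F1: "Phi j (emb0 s) \<in> Xs (Suc n)" for s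
  proof (cases "\<bar>s\<bar> < 1")
    case True
    then show ?thesis using embB[OF True] j img by blast
  next
    case False
    then show ?thesis using F3[OF j embS[OF False]] sub1 by blast
  qed
  have Rn1: "Rn (Suc 0) = emb0 ` UNIV"
  proof
    show "Rn (Suc 0) \<subseteq> emb0 ` UNIV"
    proof
      fix x assume "x \<in> Rn (Suc 0)"
      then have "emb0 (x 0) = x" by (rule Rn1_emb)
      then show "x \<in> emb0 ` UNIV" by (auto intro: image_eqI[of _ _ "x 0"])
    qed
    show "emb0 ` UNIV \<subseteq> Rn (Suc 0)" using emb0_Rn[of "Suc 0"] by auto
  qed
  define L where "L = (\<lambda>x::nat\<Rightarrow>real. emb0 (x 0))"
  define P where "P = (\<lambda>x::nat\<Rightarrow>real. Phi j (emb0 (1 - \<bar>x 0\<bar>)))"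
  have parP': "parametrization (Xs (Suc n)) (Suc 0) (Rn (Suc 0)) P"
    unfolding parametrization_def P_def using open_Rn F1 by auto
  have parP: "parametrization X (Suc 0) (Rn (Suc 0)) P"
    using parP' sub2 unfolding parametrization_def by auto
  have notplot: "(Suc 0, Rn (Suc 0), P) \<notin> D"
  proof
    assume inD: "(Suc 0, Rn (Suc 0), P) \<in> D"
    have r: "emb0 0 \<in> Rn (Suc 0)" by (rule emb0_Rn) simp
    from po_plot[OF po_n parP'] inD r obtain W where W: "open_in_Rn (Suc 0) W" "emb0 0 \<in> W"
      and alt: "((Suc 0, W, P) \<in> D \<and> P ` W \<subseteq> Xs n)
             \<or> (\<exists>j\<in>J n. \<exists>Q. smooth_map (Suc 0) n W Q \<and> (\<forall>w\<in>W. P w = Phi j (Q w)))"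
      by blast
    obtain e where e: "e > 0" "\<forall>t. \<bar>t - 0\<bar> < e \<longrightarrow> emb0 t \<in> W"
      using open_emb_nbhd[OF W(1) W(2)] by blast
    from alt show False
    proof
      assume a: "(Suc 0, W, P) \<in> D \<and> P ` W \<subseteq> Xs n"
      define t where "t = min (e/2) (1/2)"
      have t: "0 < t" "t < e" "t < 1" using e(1) unfolding t_def by auto
      have "emb0 t \<in> W" using e(2) t by auto
      then have "P (emb0 t) \<in> Xs n" using a by auto
      moreover have "P (emb0 t) = Phi j (emb0 (1 - t))" using t by (simp add: P_def)
      moreover have "emb0 (1 - t) \<in> Bn0 n" using t by (intro embB) auto
      ultimately show False using F2[OF j] by auto
    next
      assume "\<exists>j\<in>J n. \<exists>Q. smooth_map (Suc 0) n W Q \<and> (\<forall>w\<in>W. P w = Phi j (Q w))"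
      then obtain j' Q where j': "j' \<in> J n" and Q: "smooth_map (Suc 0) n W Q"
        and PQ: "\<forall>w\<in>W. P w = Phi j' (Q w)" by blast
      define e' where "e' = min e 1"
      have e': "e' > 0" using e(1) unfolding e'_def by simp
      have Qval: "\<forall>t. 0 < \<bar>t\<bar> \<and> \<bar>t\<bar> < e' \<longrightarrow> Q (emb0 t) 0 = 1 - \<bar>t\<bar>"
      proof (intro allI impI)
        fix t :: real assume tt: "0 < \<bar>t\<bar> \<and> \<bar>t\<bar> < e'"
        have w: "emb0 t \<in> W" using e(2) tt unfolding e'_def by auto
        have b: "emb0 (1 - \<bar>t\<bar>) \<in> Bn0 n" using tt unfolding e'_def by (intro embB) auto
        have Pw: "P (emb0 t) = Phi j (emb0 (1 - \<bar>t\<bar>))" by (simp add: P_def)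
        have QR: "Q (emb0 t) \<in> Rn n" using Q w unfolding smooth_map_def by blast
        have QB: "Q (emb0 t) \<in> Bn0 n"
        proof (rule ccontr)
          assume "Q (emb0 t) \<notin> Bn0 n"
          then have "Q (emb0 t) \<in> Sn0 n" using QR by (auto simp: Bn0_def Sn0_def)
          then have "Phi j' (Q (emb0 t)) \<in> Xs n" by (rule F3[OF j'])
          moreover have "Phi j (emb0 (1 - \<bar>t\<bar>)) \<notin> Xs n" by (rule F2[OF j b])
          ultimately show False using PQ w Pw by auto
        qed
        have "Phi j' (Q (emb0 t)) = Phi j (emb0 (1 - \<bar>t\<bar>))" using PQ w Pw by auto
        then have "(j', Q (emb0 t)) = (j, emb0 (1 - \<bar>t\<bar>))"
          using inj_onD[OF inj, of "(j', Q (emb0 t))" "(j, emb0 (1 - \<bar>t\<bar>))"] j j' QB b by auto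
        then show "Q (emb0 t) 0 = 1 - \<bar>t\<bar>" by simp
      qed
      have "Cinf (Suc 0) W (\<lambda>w. Q w 0)" using Q n(1) unfolding smooth_map_def by auto
      then have "Ck (Suc 0) (Suc 0) W (\<lambda>w. Q w 0)" unfolding Cinf_def by blast
      then obtain g' where "\<forall>x\<in>W. ((\<lambda>t. Q (x(0 := x 0 + t)) 0) has_real_derivative g' x) (at 0)"
        by auto
      from bspec[OF this W(2)] have "((\<lambda>t. Q (emb0 t) 0) has_real_derivative g' (emb0 0)) (at 0)"
        by simp
      then show False using abs_not_deriv[OF _ e' Qval] by blast
    qed
  qed
  have smooth: "\<forall>g. smooth_real X D g \<longrightarrow> Cinf (Suc 0) (Rn (Suc 0)) (g \<circ> P)"
  proof (intro allI impI)
    fix g assume sg: "smooth_real X D g"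
    define f where "f = (\<lambda>s. g (Phi j (emb0 s)))"
    have smL: "smooth_map (Suc 0) n (Rn (Suc 0)) L"
      unfolding L_def Rn1 using smooth_L[OF n(1)] by blast
    have par1: "parametrization (Xs (Suc n)) (Suc 0) (Rn (Suc 0)) (Phi j \<circ> L)"
      unfolding parametrization_def L_def using open_Rn F1 by auto
    have plot1: "(Suc 0, Rn (Suc 0), Phi j \<circ> L) \<in> D"
    proof (subst po_plot[OF po_n par1], intro ballI)
      fix r assume r: "r \<in> Rn (Suc 0)"
      have "\<forall>w\<in>Rn (Suc 0). (Phi j \<circ> L) w = Phi j (L w)" by simp
      then have "\<exists>j'\<in>J n. \<exists>Q. smooth_map (Suc 0) n (Rn (Suc 0)) Q \<and> (\<forall>w\<in>Rn (Suc 0). (Phi j \<circ> L) w = Phi j' (Q w))"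
        using smL j by blast
      then show "\<exists>W. open_in_Rn (Suc 0) W \<and> r \<in> W \<and> W \<subseteq> Rn (Suc 0) \<and>
            (((Suc 0, W, Phi j \<circ> L) \<in> D \<and> (Phi j \<circ> L) ` W \<subseteq> Xs n)
             \<or> (\<exists>j'\<in>J n. \<exists>Q. smooth_map (Suc 0) n W Q \<and> (\<forall>w\<in>W. (Phi j \<circ> L) w = Phi j' (Q w))))"
      proof (intro exI[of _ "Rn (Suc 0)"] conjI disjI2 subset_refl)
        show "open_in_Rn (Suc 0) (Rn (Suc 0))" by (rule open_Rn)
        show "r \<in> Rn (Suc 0)" by (rule r)
      qed assumption
    qed
    have "Cinf (Suc 0) (Rn (Suc 0)) (g \<circ> (Phi j \<circ> L))"
      using sg plot1 unfolding smooth_real_def by blast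
    moreover have "(g \<circ> (Phi j \<circ> L)) \<circ> emb0 = f" by (auto simp: L_def f_def fun_eq_iff)
    ultimately have fD: "\<forall>k. D1 k UNIV f" unfolding Cinf_def Rn1 Ck_transfer by simp
    have lc: "\<forall>s>1. \<exists>e>0. \<forall>t. \<bar>t - s\<bar> < e \<longrightarrow> f t = f s"
    proof (intro allI impI)
      fix s :: real assume s1: "s > 1"
      define V' where "V' = emb0 ` {1<..}"
      have oV': "open_in_Rn (Suc 0) V'" unfolding V'_def by (rule open_emb_image) simp
      have smL': "smooth_map (Suc 0) n V' L" unfolding V'_def L_def by (rule smooth_L[OF n(1)])
      have LS: "L ` V' \<subseteq> Sn0 n" unfolding V'_def L_def using embS by auto
      have attj: "attaching_smooth D Xs n (h n j)" using att j by blast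
      have "(Suc 0, V', h n j \<circ> L) \<in> D \<and> (h n j \<circ> L) ` V' \<subseteq> Xs n"
        using attj[unfolded attaching_smooth_def, rule_format, OF oV' smL' LS] .
      then have pl: "(Suc 0, V', h n j \<circ> L) \<in> D" "(h n j \<circ> L) ` V' \<subseteq> Xs (Suc 0)"
        using Xsn by auto
      have sV: "emb0 s \<in> V'" using s1 unfolding V'_def by auto
      obtain W where W: "open_in_Rn (Suc 0) W" "emb0 s \<in> W" "W \<subseteq> V'"
        "\<forall>w\<in>W. (h n j \<circ> L) w = (h n j \<circ> L) (emb0 s)"
        using LC[OF po0 X0 pl(1) oV' pl(2) sV] by blast
      obtain e where e: "e > 0" "\<forall>t. \<bar>t - s\<bar> < e \<longrightarrow> emb0 t \<in> W"
        using open_emb_nbhd[OF W(1) W(2)] by blast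
      show "\<exists>e>0. \<forall>t. \<bar>t - s\<bar> < e \<longrightarrow> f t = f s"
      proof (intro exI[of _ "min e (s - 1)"] conjI allI impI)
        show "0 < min e (s - 1)" using e(1) s1 by simp
        fix t assume "\<bar>t - s\<bar> < min e (s - 1)"
        then have t: "\<bar>t - s\<bar> < e" "t > 1" by auto
        have "emb0 t \<in> W" using e(2) t(1) by blast
        then have "(h n j \<circ> L) (emb0 t) = (h n j \<circ> L) (emb0 s)" using W(4) by blast
        then have hh: "h n j (emb0 t) = h n j (emb0 s)" by (simp add: L_def)
        have "Phi j (emb0 t) = h n j (emb0 t)" using bd j embS[of t] t(2) by auto
        moreover have "Phi j (emb0 s) = h n j (emb0 s)" using bd j embS[of s] s1 by auto
        ultimately show "f t = f s" using hh by (simp add: f_def)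
      qed
    qed
    have fld: "D1 k UNIV (fld 1 1 f)" for k
      by (rule fold_D1[of k, rule_format, OF fD[rule_format]]) (use lc in auto)
    have "(g \<circ> P) \<circ> emb0 = fld 1 1 f" by (auto simp: fun_eq_iff fld_def P_def f_def)
    then show "Cinf (Suc 0) (Rn (Suc 0)) (g \<circ> P)"
      unfolding Cinf_def Rn1 Ck_transfer using fld by simp
  qed
  show False using refl parP smooth notplot unfolding reflexive_def by blast
qed

end
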